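(* Let $v_1\ge v_2>0$, $m\in\mathbb{Z}_{\ge2}$ and $0<b<m$. A strategy profile $(X,Y)$ with $\mathbf{E}(X)=m$ and $\mathbf{E}(Y)=b$ is a Nash equilibrium of the discrete all-pay auction with valuations $v_1,v_2$ if and only if $m=v_2/2$, $b\in\left[\frac{v_2(v_2-2)}{2v_1},\frac{v_2(v_2+2)}{2v_1}\right]$, $X=U_{\mathrm{O}}^m$, and $Y=\left(1-\frac bm\right)\delta_0+\frac bm Z$ where $Z=\lambda_{\mathrm{O}}U_{\mathrm{O}}^m+\lambda_{\mathrm{E}}U_{\mathrm{E}}^m+\lambda_{\mathrm{O}\uparrow1}U_{\mathrm{O}\uparrow1}^m+\sum_{j=1}^{m-1}\lambda_jW_j^m$ with $\lambda_{\mathrm{O}},\lambda_{\mathrm{E}},\lambda_{\mathrm{O}\uparrow1},\lambda_1,\dots,\lambda_{m-1}\ge0$, $\lambda_{\mathrm{O}}+\lambda_{\mathrm{E}}+\lambda_{\mathrm{O}\uparrow1}+\sum_{j=1}^{m-1}\lambda_j=1$, $\frac{\lambda_{\mathrm{O}\uparrow1}}{m-1}-\frac{\lambda_{\mathrm{E}}}{m+1}=\frac{v_2^2}{2v_1b}-1$, and $\lambda_{\mathrm{O}}\ge\frac{v_2}{2b}\left(\frac{v_2(v_2+2)}{2v_1}+b-v_2\right)$. In this case $P^1(X,Y)=\frac{v_1-v_2}{2}+\frac{v_1}{v_2}\left(\frac{v_2}{2}-b\right)$ and $P^2(Y,X)=0$.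
   Context: Discrete all-pay auction: two players, 1 and 2, value a prize at $v_1$ and $v_2$ respectively, where $v_1\ge v_2>0$. A (mixed) strategy is a probability distribution on $\mathbb{Z}_{\ge 0}$ with finite mean, identified with a $\mathbb{Z}_{\ge0}$-valued random variable; the two players' choices are independent. If player 1 uses $X$ and player 2 uses $Y$, the expected payoffs are $P^1(X,Y)=v_1\Pr(X>Y)+\frac{v_1}{2}\Pr(X=Y)-\mathbf{E}(X)$ and $P^2(Y,X)=v_2\Pr(Y>X)+\frac{v_2}{2}\Pr(X=Y)-\mathbf{E}(Y)$. A Nash equilibrium of the all-pay auction is a pair $(X,Y)$ with $P^1(X,Y)\ge P^1(X',Y)$ and $P^2(Y,X)\ge P^2(Y',X)$ for all strategies $X',Y'$. $\delta_j$ denotes the point mass at $j$; $\lambda A+(1-\lambda)B$ denotes the mixture of distributions $A$ and $B$ (similarly for longer convex combinations). Special distributions: for $m\ge1$, $U_{\mathrm{O}}^m$ is the uniform distribution on $\{1,3,\dots,2m-1\}$; for $m\ge0$, $U_{\mathrm{E}}^m$ is the uniform distribution on $\{0,2,\dots,2m\}$; for $m\ge2$, $U_{\mathrm{O}\uparrow1}^m$ is the uniform distribution on $\{2,4,\dots,2m-2\}$; for $m\ge2$ and $1\le j\le m-1$, $W_j^m=\frac{1}{2m}\delta_0+\sum_{i=1}^{j-1}\frac1m\delta_{2i}+\frac{1}{2m}\delta_{2j}+\sum_{i=j+1}^{m}\frac1m\delta_{2i-1}$. *)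

theory Defs
  imports Complex_Main
begin

definition strategy :: "(nat \<Rightarrow> real) \<Rightarrow> bool" where
  "strategy p \<longleftrightarrow> (\<forall>n. 0 \<le> p n) \<and> p sums 1 \<and> summable (\<lambda>n. real n * p n)"

definition mean :: "(nat \<Rightarrow> real) \<Rightarrow> real" where
  "mean p = (\<Sum>n. real n * p n)"

definition prob_gt :: "(nat \<Rightarrow> real) \<Rightarrow> (nat \<Rightarrow> real) \<Rightarrow> real" where
  "prob_gt p q = (\<Sum>x. p x * (\<Sum>y<x. q y))"

definition prob_eq :: "(nat \<Rightarrow> real) \<Rightarrow> (nat \<Rightarrow> real) \<Rightarrow> real" where
  "prob_eq p q = (\<Sum>x. p x * q x)"

definition payoff :: "real \<Rightarrow> (nat \<Rightarrow> real) \<Rightarrow> (nat \<Rightarrow> real) \<Rightarrow> real" where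
  "payoff v p q = v * prob_gt p q + v / 2 * prob_eq p q - mean p"

definition nash :: "real \<Rightarrow> real \<Rightarrow> (nat \<Rightarrow> real) \<Rightarrow> (nat \<Rightarrow> real) \<Rightarrow> bool" where
  "nash v1 v2 p q \<longleftrightarrow> strategy p \<and> strategy q \<and>
     (\<forall>p'. strategy p' \<longrightarrow> payoff v1 p' q \<le> payoff v1 p q) \<and>
     (\<forall>q'. strategy q' \<longrightarrow> payoff v2 q' p \<le> payoff v2 q p)"

definition delta :: "nat \<Rightarrow> nat \<Rightarrow> real" where
  "delta j = (\<lambda>n. if n = j then 1 else 0)"

definition UO :: "nat \<Rightarrow> nat \<Rightarrow> real" where
  "UO m = (\<lambda>n. if odd n \<and> n \<le> 2*m - 1 then 1 / real m else 0)"

definition UE :: "nat \<Rightarrow> nat \<Rightarrow> real" where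
  "UE m = (\<lambda>n. if even n \<and> n \<le> 2*m then 1 / (real m + 1) else 0)"

definition UOup :: "nat \<Rightarrow> nat \<Rightarrow> real" where
  "UOup m = (\<lambda>n. if even n \<and> 2 \<le> n \<and> n \<le> 2*m - 2 then 1 / (real m - 1) else 0)"

definition W :: "nat \<Rightarrow> nat \<Rightarrow> nat \<Rightarrow> real" where
  "W m j = (\<lambda>n. if n = 0 then 1 / (2 * real m)
     else if even n \<and> n < 2*j then 1 / real m
     else if n = 2*j then 1 / (2 * real m)
     else if odd n \<and> 2*j + 1 \<le> n \<and> n \<le> 2*m - 1 then 1 / real m
     else 0)"

end

theory Submission
  imports Defs
begin

definition cdf :: "(nat \<Rightarrow> real) \<Rightarrow> nat \<Rightarrow> real" where
  "cdf p k = (\<Sum>y<k. p y)"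

definition u :: "real \<Rightarrow> (nat \<Rightarrow> real) \<Rightarrow> nat \<Rightarrow> real" where
  "u v q k = v * (cdf q k + q k / 2) - real k"

lemma strat_nonneg: "strategy p \<Longrightarrow> 0 \<le> p n"
  by (simp add: strategy_def)

lemma strat_summable: "strategy p \<Longrightarrow> summable p"
  by (auto simp: strategy_def sums_summable)

lemma strat_suminf: "strategy p \<Longrightarrow> suminf p = 1"
  by (auto simp: strategy_def sums_unique[symmetric])

lemma strat_mean_summable: "strategy p \<Longrightarrow> summable (\<lambda>n. real n * p n)"
  by (simp add: strategy_def)

lemma cdf_0[simp]: "cdf p 0 = 0" by (simp add: cdf_def)

lemma cdf_Suc: "cdf p (Suc k) = cdf p k + p k" by (simp add: cdf_def)

lemma cdf_nonneg: "strategy p \<Longrightarrow> 0 \<le> cdf p k"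
  unfolding cdf_def by (intro sum_nonneg) (auto intro: strat_nonneg)

lemma cdf_le1: "strategy p \<Longrightarrow> cdf p k \<le> 1"
proof -
  assume s: "strategy p"
  have "cdf p k \<le> suminf p" unfolding cdf_def
    by (rule sum_le_suminf) (auto intro: strat_summable[OF s] strat_nonneg[OF s])
  thus ?thesis using strat_suminf[OF s] by simp
qed

lemma cdf_mono: "strategy p \<Longrightarrow> j \<le> k \<Longrightarrow> cdf p j \<le> cdf p k"
  unfolding cdf_def by (rule sum_mono2) (auto intro: strat_nonneg)

lemma strat_le1: "strategy p \<Longrightarrow> p k \<le> 1"
  using cdf_le1[of p "Suc k"] cdf_nonneg[of p k] cdf_Suc[of p k] by simp

lemma cdf_lim: "strategy p \<Longrightarrow> (\<lambda>k. cdf p k) \<longlonglongrightarrow> 1"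
  unfolding cdf_def using summable_LIMSEQ[OF strat_summable] strat_suminf by metis

lemma summable_bounded:
  assumes "strategy p" and "\<And>k. 0 \<le> f k" and "\<And>k. f k \<le> 1"
  shows "summable (\<lambda>k. p k * f k)"
proof (rule summable_comparison_test'[OF strat_summable[OF assms(1)]])
  fix n
  show "norm (p n * f n) \<le> p n"
    using assms strat_nonneg[OF assms(1), of n]
    by (simp add: abs_mult mult_left_le)
qed

lemma payoff_sums:
  assumes "strategy p" "strategy q"
  shows "(\<lambda>k. p k * u v q k) sums payoff v p q"
proof -
  have s1: "(\<lambda>k. p k * cdf q k) sums prob_gt p q"
    unfolding prob_gt_def cdf_def[symmetric]
    by (rule summable_sums, rule summable_bounded[OF assms(1)])
       (auto intro: cdf_nonneg cdf_le1 assms(2))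
  have s2: "(\<lambda>k. p k * q k) sums prob_eq p q"
    unfolding prob_eq_def
    by (rule summable_sums, rule summable_bounded[OF assms(1)])
       (auto intro: strat_nonneg strat_le1 assms(2))
  have s3: "(\<lambda>k. real k * p k) sums mean p"
    unfolding mean_def by (rule summable_sums, rule strat_mean_summable[OF assms(1)])
  have "(\<lambda>k. v * (p k * cdf q k) + v / 2 * (p k * q k) - real k * p k) sums
        (v * prob_gt p q + v / 2 * prob_eq p q - mean p)"
    by (intro sums_diff sums_add sums_mult s1 s2 s3)
  moreover have "(\<lambda>k. v * (p k * cdf q k) + v / 2 * (p k * q k) - real k * p k) = (\<lambda>k. p k * u v q k)"
    by (auto simp: u_def algebra_simps)
  ultimately show ?thesis by (simp add: payoff_def)
qed

lemma payoff_eq: assumes "strategy p" "strategy q" shows "payoff v p q = (\<Sum>k. p k * u v q k)"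
  using sums_unique[OF payoff_sums[OF assms, of v]] by simp

lemma strategy_delta: "strategy (delta k)"
proof -
  have "(\<lambda>n. if n = k then 1 else 0) sums (1::real)"
    using sums_single[of k "\<lambda>_. 1::real"] by simp
  moreover have "summable (\<lambda>n. real n * delta k n)"
  proof -
    have "(\<lambda>n. if n = k then real k else 0) sums real k"
      using sums_single[of k "\<lambda>_. real k"] by simp
    moreover have "(\<lambda>n. real n * delta k n) = (\<lambda>n. if n = k then real k else 0)"
      by (auto simp: delta_def)
    ultimately show ?thesis by (simp add: sums_summable)
  qed
  ultimately show ?thesis by (auto simp: strategy_def delta_def)
qed

lemma payoff_delta: "strategy q \<Longrightarrow> payoff v (delta k) q = u v q k"
proof -
  assume s: "strategy q"
  have "(\<lambda>n. delta k n * u v q n) = (\<lambda>n. if n = k then u v q k else 0)"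
    by (auto simp: delta_def)
  hence "(\<lambda>n. delta k n * u v q n) sums u v q k"
    using sums_single[of k "\<lambda>_. u v q k"] by simp
  moreover have "(\<lambda>n. delta k n * u v q n) sums payoff v (delta k) q"
    by (rule payoff_sums[OF strategy_delta s])
  ultimately show ?thesis by (simp add: sums_unique2)
qed

lemma payoff_le:
  assumes "strategy p" "strategy q" "\<And>k. u v q k \<le> A"
  shows "payoff v p q \<le> A"
proof -
  have s1: "(\<lambda>k. p k * u v q k) sums payoff v p q" by (rule payoff_sums[OF assms(1,2)])
  have s2: "(\<lambda>k. p k * A) sums A"
    using sums_mult2[OF strategy_def[THEN iffD1, OF assms(1), THEN conjunct2, THEN conjunct1], of A]
    by simp
  have "\<And>k. p k * u v q k \<le> p k * A"
    using assms(3) strat_nonneg[OF assms(1)] by (simp add: mult_left_mono)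
  thus ?thesis using sums_le[OF _ s1 s2] by blast
qed

lemma payoff_const:
  assumes "strategy p" "strategy q" "\<And>k. p k * u v q k = p k * A"
  shows "payoff v p q = A"
proof -
  have "(\<lambda>k. p k * u v q k) sums payoff v p q" by (rule payoff_sums[OF assms(1,2)])
  moreover have "(\<lambda>k. p k * A) sums A"
    using sums_mult2[OF strategy_def[THEN iffD1, OF assms(1), THEN conjunct2, THEN conjunct1], of A]
    by simp
  ultimately show ?thesis using assms(3) by (simp add: sums_unique2)
qed


lemma summable_gt: "strategy p \<Longrightarrow> strategy q \<Longrightarrow> summable (\<lambda>x. p x * cdf q x)"
  by (rule summable_bounded) (auto intro: cdf_nonneg cdf_le1)

lemma summable_eq: "strategy p \<Longrightarrow> strategy q \<Longrightarrow> summable (\<lambda>x. p x * q x)"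
  by (rule summable_bounded) (auto intro: strat_nonneg strat_le1)

lemma prob_gt_cdf: "prob_gt p q = (\<Sum>x. p x * cdf q x)"
  by (simp add: prob_gt_def cdf_def)

lemma partial_identity:
  "(\<Sum>x<N. p x * cdf q x) + (\<Sum>x<N. p x * q x) + (\<Sum>y<N. q y * cdf p y) = cdf p N * cdf q N"
proof (induction N)
  case 0 then show ?case by simp
next
  case (Suc N)
  then show ?case by (simp add: cdf_Suc algebra_simps)
qed

lemma prob_identity:
  assumes "strategy p" "strategy q"
  shows "prob_gt p q + prob_eq p q + prob_gt q p = 1"
proof -
  have l1: "(\<lambda>N. \<Sum>x<N. p x * cdf q x) \<longlonglongrightarrow> prob_gt p q"
    unfolding prob_gt_cdf by (rule summable_LIMSEQ[OF summable_gt[OF assms]])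
  have l2: "(\<lambda>N. \<Sum>x<N. p x * q x) \<longlonglongrightarrow> prob_eq p q"
    unfolding prob_eq_def by (rule summable_LIMSEQ[OF summable_eq[OF assms]])
  have l3: "(\<lambda>N. \<Sum>x<N. q x * cdf p x) \<longlonglongrightarrow> prob_gt q p"
    unfolding prob_gt_cdf by (rule summable_LIMSEQ[OF summable_gt[OF assms(2,1)]])
  have "(\<lambda>N. (\<Sum>x<N. p x * cdf q x) + (\<Sum>x<N. p x * q x) + (\<Sum>y<N. q y * cdf p y))
          \<longlonglongrightarrow> prob_gt p q + prob_eq p q + prob_gt q p"
    by (intro tendsto_add l1 l2 l3)
  moreover have "(\<lambda>N. cdf p N * cdf q N) \<longlonglongrightarrow> 1 * 1"
    by (intro tendsto_mult cdf_lim assms)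
  ultimately show ?thesis unfolding partial_identity using LIMSEQ_unique by fastforce
qed

lemma prob_eq_sym: "prob_eq p q = prob_eq q p"
  by (simp add: prob_eq_def mult.commute)

lemma payoff_identity:
  assumes "strategy p" "strategy q" "v1 > 0" "v2 > 0"
  shows "(payoff v1 p q + mean p) / v1 + (payoff v2 q p + mean q) / v2 = 1"
proof -
  have "(payoff v1 p q + mean p) / v1 = prob_gt p q + prob_eq p q / 2"
    using assms(3) by (simp add: payoff_def field_simps)
  moreover have "(payoff v2 q p + mean q) / v2 = prob_gt q p + prob_eq p q / 2"
    using assms(4) by (simp add: payoff_def field_simps prob_eq_sym)
  ultimately show ?thesis using prob_identity[OF assms(1,2)] by simp
qed

lemma payoff_self:
  assumes "strategy p"
  shows "payoff v p p = v / 2 - mean p"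
proof -
  have "prob_gt p p + prob_eq p p + prob_gt p p = 1" by (rule prob_identity[OF assms assms])
  hence e: "prob_gt p p = (1 - prob_eq p p) / 2" by simp
  have "payoff v p p = v * ((1 - prob_eq p p) / 2) + v / 2 * prob_eq p p - mean p"
    by (simp add: payoff_def e)
  also have "\<dots> = v / 2 - mean p" by (simp add: field_simps)
  finally show ?thesis .
qed

lemma abel_identity:
  "(\<Sum>k<M. real k * p k) = (\<Sum>j\<in>{1..<M}. cdf p M - cdf p j)"
proof (induction M)
  case 0 then show ?case by simp
next
  case (Suc M)
  show ?case
  proof (cases "M = 0")
    case True then show ?thesis by simp
  next
    case False
    have "(\<Sum>j\<in>{1..<Suc M}. cdf p (Suc M) - cdf p j) = (\<Sum>j\<in>{1..<M}. cdf p (Suc M) - cdf p j) + (cdf p (Suc M) - cdf p M)"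
      using False by (simp add: atLeastLessThanSuc)
    also have "(\<Sum>j\<in>{1..<M}. cdf p (Suc M) - cdf p j) = (\<Sum>j\<in>{1..<M}. p M + (cdf p M - cdf p j))"
      by (simp add: cdf_Suc algebra_simps)
    also have "\<dots> = (\<Sum>j\<in>{1..<M}. cdf p M - cdf p j) + real (M - 1) * p M"
      by (simp only: sum.distrib) (simp add: algebra_simps)
    finally show ?thesis using Suc False by (simp add: cdf_Suc of_nat_diff algebra_simps)
  qed
qed

lemma mean_bound:
  assumes "strategy p"
  shows "(\<Sum>j\<in>{1..N}. 1 - cdf p j) \<le> mean p"
proof -
  have lim: "(\<lambda>M. \<Sum>j\<in>{1..N}. cdf p M - cdf p j) \<longlonglongrightarrow> (\<Sum>j\<in>{1..N}. 1 - cdf p j)"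
    by (intro tendsto_sum tendsto_diff cdf_lim assms tendsto_const)
  have "\<forall>M\<ge>Suc N. (\<Sum>j\<in>{1..N}. cdf p M - cdf p j) \<le> mean p"
  proof (intro allI impI)
    fix M assume M: "M \<ge> Suc N"
    have "(\<Sum>j\<in>{1..N}. cdf p M - cdf p j) \<le> (\<Sum>j\<in>{1..<M}. cdf p M - cdf p j)"
      using M by (intro sum_mono2) (auto intro: cdf_mono assms)
    also have "\<dots> = (\<Sum>k<M. real k * p k)" by (rule abel_identity[symmetric])
    also have "\<dots> \<le> mean p" unfolding mean_def
      using strat_nonneg[OF assms] by (intro sum_le_suminf strat_mean_summable assms) auto
    finally show "(\<Sum>j\<in>{1..N}. cdf p M - cdf p j) \<le> mean p" .
  qed
  thus ?thesis using LIMSEQ_le_const2[OF lim] by blast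
qed


lemma sum_pairs_odd: fixes f :: "nat \<Rightarrow> real" shows "(\<Sum>i<n. f (2*i+1) + f (2*i+2)) = (\<Sum>j\<in>{1..2*n}. (f j :: real))"
proof (induction n)
  case 0 then show ?case by simp
next
  case (Suc n)
  have "{1..2 * Suc n} = insert (2*n+2) (insert (2*n+1) {1..2*n})" by auto
  then show ?case using Suc by (simp add: add.assoc)
qed

lemma sum_pairs_even: fixes f :: "nat \<Rightarrow> real" shows "(\<Sum>i<n. f (2*i) + f (2*i+1)) = (\<Sum>j<2*n. (f j :: real))"
proof (induction n)
  case 0 then show ?case by simp
next
  case (Suc n)
  have "{..<2 * Suc n} = insert (2*n+1) (insert (2*n) {..<2*n})" by auto
  then show ?case using Suc by (simp add: add.assoc)
qed

lemma sum_bo: "(c::real) \<noteq> 0 \<Longrightarrow> (\<Sum>i<n. 2 - real (2*i+1) / c) = 2 * real n - real n ^ 2 / c"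
  by (induction n) (auto simp: field_simps power2_eq_square)

lemma sum_be: "(c::real) \<noteq> 0 \<Longrightarrow> (\<Sum>i<n. 2 - real (2*i) / c) = 2 * real n - real n * (real n - 1) / c"
  by (induction n) (auto simp: field_simps)

lemma sum_eq_bound:
  fixes f g :: "nat \<Rightarrow> real"
  assumes "\<forall>i<n. g i \<le> f i" "(\<Sum>i<n. f i) \<le> (\<Sum>i<n. g i)"
  shows "\<forall>i<n. f i = g i"
proof -
  have "(\<Sum>i<n. f i - g i) = 0"
  proof -
    have "(\<Sum>i<n. f i - g i) \<ge> 0" using assms(1) by (intro sum_nonneg) auto
    moreover have "(\<Sum>i<n. f i - g i) \<le> 0" using assms(2) by (simp add: sum_subtractf)
    ultimately show ?thesis by simp
  qed
  hence "\<forall>i\<in>{..<n}. f i - g i = 0" using assms(1) by (subst (asm) sum_nonneg_eq_0_iff) auto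
  thus ?thesis by auto
qed

lemma p_forced_core:
  fixes x :: "nat \<Rightarrow> real" and m :: nat
  assumes m: "m \<ge> 1" and x0: "x 0 = 1" and nn: "\<forall>j. 0 \<le> x j" and mono: "\<forall>j. x (Suc j) \<le> x j"
    and pair: "\<forall>k. x k + x (Suc k) \<ge> 2 - real k / real m"
    and tot: "(\<Sum>j\<in>{1..2*m}. x j) \<le> real m"
  shows "\<forall>i<m. x (2*i) = 1 - real i / m \<and> x (2*i+1) = 1 - real i / m"
    and "\<forall>j\<ge>2*m. x j = 0"
proof -
  have mpos: "real m > 0" using m by simp
  have bo: "(\<Sum>i<m. 2 - real (2*i+1) / real m) = real m"
    using sum_bo[of "real m" m] mpos by (simp add: power2_eq_square)
  have be: "(\<Sum>i<m. 2 - real (2*i) / real m) = real m + 1"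
  proof -
    have "(\<Sum>i<m. 2 - real (2*i) / real m) = 2 * real m - real m * (real m - 1) / real m"
      by (rule sum_be) (use mpos in simp)
    also have "\<dots> = real m + 1" using mpos by (simp add: field_simps)
    finally show ?thesis .
  qed
  have po: "\<forall>i<m. 2 - real (2*i+1) / real m \<le> x (2*i+1) + x (2*i+2)"
  proof (intro allI impI)
    fix i assume "i < m"
    have "Suc (2*i+1) = 2*i+2" by simp
    thus "2 - real (2*i+1) / real m \<le> x (2*i+1) + x (2*i+2)" using pair[rule_format, of "2*i+1"] by simp
  qed
  have pe: "\<forall>i<m. 2 - real (2*i) / real m \<le> x (2*i) + x (2*i+1)"
  proof (intro allI impI)
    fix i assume "i < m"
    show "2 - real (2*i) / real m \<le> x (2*i) + x (2*i+1)" using pair[rule_format, of "2*i"] by simp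
  qed
  have so: "(\<Sum>i<m. x (2*i+1) + x (2*i+2)) \<ge> real m"
    using bo po by (metis (no_types, lifting) lessThan_iff sum_mono)
  have se: "(\<Sum>i<m. x (2*i) + x (2*i+1)) \<ge> real m + 1"
    using be pe by (metis (no_types, lifting) lessThan_iff sum_mono)
  have s1: "(\<Sum>j\<in>{1..2*m}. x j) = (\<Sum>j\<in>{1..<2*m}. x j) + x (2*m)"
    using m by (simp add: atLeastLessThanSuc_atLeastAtMost[symmetric] atLeastLessThanSuc)
  have s2: "(\<Sum>j<2*m. x j) = x 0 + (\<Sum>j\<in>{1..<2*m}. x j)"
  proof -
    have "{..<2*m} = insert 0 {1..<2*m}" using m by auto
    thus ?thesis by simp
  qed
  have e1: "x (2*m) = 0" and e2: "(\<Sum>i<m. x (2*i+1) + x (2*i+2)) = real m"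
    and e3: "(\<Sum>i<m. x (2*i) + x (2*i+1)) = real m + 1"
    using so se tot s1 s2 x0 nn[rule_format, of "2*m"]
    unfolding sum_pairs_odd sum_pairs_even by linarith+
  have eo: "\<forall>i<m. x (2*i+1) + x (2*i+2) = 2 - real (2*i+1) / real m"
    by (rule sum_eq_bound) (use po e2 bo in auto)
  have ee: "\<forall>i<m. x (2*i) + x (2*i+1) = 2 - real (2*i) / real m"
    by (rule sum_eq_bound) (use pe e3 be in auto)
  show main: "\<forall>i<m. x (2*i) = 1 - real i / m \<and> x (2*i+1) = 1 - real i / m"
  proof (intro allI impI)
    fix i assume "i < m"
    then show "x (2*i) = 1 - real i / m \<and> x (2*i+1) = 1 - real i / m"
    proof (induction i)
      case 0
      then show ?case using ee x0 by auto
    next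
      case (Suc i)
      have h: "x (2*i) = 1 - real i / m \<and> x (2*i+1) = 1 - real i / m" using Suc by simp
      have a1: "x (2*i+2) = 1 - real (Suc i) / m"
        using eo[rule_format, of i] h Suc.prems mpos by (simp add: field_simps)
      have a2: "x (2*Suc i + 1) = 1 - real (Suc i) / m"
        using ee[rule_format, of "Suc i"] a1 Suc.prems mpos by (simp add: field_simps)
      show ?case using a1 a2 by (simp add: add.commute)
    qed
  qed
  show "\<forall>j\<ge>2*m. x j = 0"
  proof (intro allI impI)
    fix j assume "j \<ge> 2*m"
    then show "x j = 0"
    proof (induction j rule: dec_induct)
      case base then show ?case by (rule e1)
    next
      case (step n) then show ?case using mono nn by (metis order_antisym)
    qed
  qed
qed

lemma p_is_UO:
  assumes s: "strategy p" and mp: "mean p = real m" and m: "m \<ge> 1"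
    and dev: "\<forall>k. u (2 * real m) p k \<le> 0"
  shows "p = UO m"
proof -
  define x where "x = (\<lambda>j. 1 - cdf p j)"
  have mpos: "real m > 0" using m by simp
  have pair: "\<forall>k. x k + x (Suc k) \<ge> 2 - real k / real m"
  proof
    fix k
    have "2 * real m * (cdf p k + p k / 2) - real k \<le> 0" using dev[rule_format, of k] by (simp add: u_def)
    hence "2 * cdf p k + p k \<le> real k / real m" using mpos by (simp add: field_simps)
    thus "x k + x (Suc k) \<ge> 2 - real k / real m" by (simp add: x_def cdf_Suc)
  qed
  have tot: "(\<Sum>j\<in>{1..2*m}. x j) \<le> real m" using mean_bound[OF s, of "2*m"] mp by (simp add: x_def)
  have x0: "x 0 = 1" by (simp add: x_def)
  have nn: "\<forall>j. 0 \<le> x j" using cdf_le1[OF s] by (simp add: x_def)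
  have mono: "\<forall>j. x (Suc j) \<le> x j" using cdf_mono[OF s] by (simp add: x_def)
  note r = p_forced_core[OF m x0 nn mono pair tot]
  have pk: "\<And>k. p k = x k - x (Suc k)" by (simp add: x_def cdf_Suc)
  show ?thesis
  proof
    fix k
    show "p k = UO m k"
    proof (cases "k \<ge> 2*m")
      case True
      then show ?thesis using r(2) pk[of k] m by (auto simp: UO_def)
    next
      case False
      define i where "i = k div 2"
      have im: "i < m" using False by (simp add: i_def)
      show ?thesis
      proof (cases "even k")
        case True
        hence k: "k = 2*i" by (simp add: i_def)
        show ?thesis using r(1)[rule_format, OF im] pk[of k] k True by (simp add: UO_def)
      next
        case odd: False
        hence k: "k = 2*i+1" by (simp add: i_def)
        have "x (Suc k) = 1 - real (Suc i) / real m"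
        proof (cases "Suc i < m")
          case True
          then show ?thesis using r(1)[rule_format, OF True] k by simp
        next
          case False
          hence "Suc i = m" using im by simp
          then show ?thesis using r(2) k by simp
        qed
        moreover have "x k = 1 - real i / m" using r(1)[rule_format, OF im] k by simp
        moreover have "k \<le> 2 * m - 1" using k im by simp
        ultimately have "p k = (1 - real i / m) - (1 - real (Suc i) / m)" "k \<le> 2 * m - 1"
          using pk[of k] by simp_all
        moreover have "(1 - real i / m) - (1 - real (Suc i) / m) = 1 / real m"
          using mpos by (simp add: field_simps)
        ultimately show ?thesis using odd by (simp add: UO_def)
      qed
    qed
  qed
qed


lemma nash_dev1: "nash v1 v2 p q \<Longrightarrow> u v1 q k \<le> payoff v1 p q"
  unfolding nash_def using payoff_delta strategy_delta by metis

lemma nash_dev2: "nash v1 v2 p q \<Longrightarrow> u v2 p k \<le> payoff v2 q p"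
  unfolding nash_def using payoff_delta strategy_delta by metis

lemma sum_odd_nat: "(\<Sum>i<n. real (2*i+1)) = real n ^ 2"
  by (induction n) (auto simp: power2_eq_square algebra_simps)

lemma sum_u_odd:
  "(\<Sum>i<n. u v q (2*i+1)) = v / 2 * (\<Sum>j\<in>{1..2*n}. cdf q j) - real n ^ 2"
proof -
  have "(\<Sum>i<n. u v q (2*i+1)) = (\<Sum>i<n. v / 2 * (cdf q (2*i+1) + cdf q (2*i+2)) - real (2*i+1))"
    by (intro sum.cong) (auto simp: u_def cdf_Suc field_simps)
  also have "\<dots> = v / 2 * (\<Sum>i<n. cdf q (2*i+1) + cdf q (2*i+2)) - (\<Sum>i<n. real (2*i+1))"
    by (simp add: sum_subtractf sum_distrib_left)
  also have "\<dots> = v / 2 * (\<Sum>j\<in>{1..2*n}. cdf q j) - real n ^ 2"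
    by (simp only: sum_pairs_odd sum_odd_nat)
  finally show ?thesis .
qed


lemma nash_structure:
  fixes v1 v2 b :: real and m :: nat
  assumes nash: "nash v1 v2 p q" and v: "v1 \<ge> v2" "v2 > 0" and m: "m \<ge> 1"
    and b: "0 < b" "b < real m" and sp: "strategy p" and sq: "strategy q"
    and mp: "mean p = real m" and mq: "mean q = b"
  shows "v2 = 2 * real m \<and> payoff v2 q p = 0 \<and> p = UO m \<and>
         payoff v1 p q = v1 - real m - v1 * b / (2 * real m) \<and>
         (\<forall>k. u v1 q k \<le> payoff v1 p q) \<and>
         (\<forall>i<m. u v1 q (2*i+1) = payoff v1 p q) \<and>
         (\<forall>k>2*m. q k = 0) \<and> cdf q (2*m+1) = 1"
proof -
  define a where "a = payoff v1 p q"
  define c where "c = payoff v2 q p"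
  have v1pos: "v1 > 0" using v by simp
  have mpos: "real m > 0" using m by simp
  have dev1: "\<forall>k. u v1 q k \<le> a" using nash_dev1[OF nash] by (simp add: a_def)
  have dev2: "\<forall>k. u v2 p k \<le> c" using nash_dev2[OF nash] by (simp add: c_def)
  have G: "v2 / 2 - real m \<le> c"
    using nash sp payoff_self[OF sp, of v2] mp unfolding nash_def c_def by metis
  have c0: "0 \<le> c"
  proof -
    have "0 \<le> v2 * p 0" using v(2) strat_nonneg[OF sp, of 0] by simp
    thus ?thesis using dev2[rule_format, of 0] by (simp add: u_def)
  qed
  have Id: "(a + real m) / v1 + (c + b) / v2 = 1"
    using payoff_identity[OF sp sq v1pos v(2)] mp mq by (simp add: a_def c_def)
  have Id2: "(a + real m) * v2 + (c + b) * v1 = v1 * v2"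
    using Id v1pos v(2) by (simp add: field_simps)
  have sumu: "(\<Sum>i<m. u v1 q (2*i+1)) \<le> real m * a"
  proof -
    have "(\<Sum>i<m. u v1 q (2*i+1)) \<le> (\<Sum>i<m. a)" using dev1 by (intro sum_mono) auto
    thus ?thesis by simp
  qed
  have mb: "(\<Sum>j\<in>{1..2*m}. 1 - cdf q j) \<le> b" using mean_bound[OF sq, of "2*m"] mq by simp
  have sQ: "(\<Sum>j\<in>{1..2*m}. cdf q j) \<ge> 2 * real m - b"
    using mb by (simp add: sum_subtractf)
  have h1: "real m * a \<ge> v1 / 2 * (2 * real m - b) - real m ^ 2"
  proof -
    have "v1 / 2 * (2 * real m - b) \<le> v1 / 2 * (\<Sum>j\<in>{1..2*m}. cdf q j)"
      using sQ v1pos by (intro mult_left_mono) auto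
    thus ?thesis using sumu sum_u_odd[where n=m and v=v1 and q=q] by linarith
  qed
  have h1v: "real m * a * v2 \<ge> (v1 * real m - v1 * b / 2 - real m ^ 2) * v2"
    using mult_right_mono[OF h1, of v2] v(2) by (simp add: algebra_simps)
  have Id3: "real m * a * v2 = real m * v1 * v2 - real m ^ 2 * v2 - real m * (c + b) * v1"
  proof -
    have "real m * ((a + real m) * v2 + (c + b) * v1) = real m * (v1 * v2)" using Id2 by simp
    thus ?thesis by (simp add: algebra_simps power2_eq_square)
  qed
  have "v1 * (2 * real m * (c + b)) \<le> v1 * (b * v2)"
    using h1v Id3 by (simp add: algebra_simps power2_eq_square)
  hence k1: "2 * real m * (c + b) \<le> b * v2" using v1pos by simp
  have k2: "b * v2 \<le> b * (2 * real m + 2 * c)" using G b(1) by (intro mult_left_mono) auto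
  have "c * (real m - b) \<le> 0" using k1 k2 by (simp add: algebra_simps)
  hence cz: "c = 0"
    using c0 b(2) by (metis diff_gt_0_iff_gt less_eq_real_def mult_pos_pos not_less)
  have "b * (2 * real m) \<le> b * v2" using k1 cz by (simp add: algebra_simps)
  hence "2 * real m \<le> v2" using b(1) by simp
  hence v2m: "v2 = 2 * real m" using G cz by simp
  have pUO: "p = UO m" by (rule p_is_UO[OF sp mp m]) (use dev2 cz v2m in auto)
  have aval: "a = v1 - real m - v1 * b / (2 * real m)"
    using Id cz v2m v1pos mpos by (simp add: field_simps)
  have ma: "real m * a = v1 / 2 * (2 * real m - b) - real m ^ 2"
    using aval mpos by (simp add: field_simps power2_eq_square)
  have sumu2: "(\<Sum>i<m. u v1 q (2*i+1)) \<ge> real m * a"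
  proof -
    have "v1 / 2 * (2 * real m - b) \<le> v1 / 2 * (\<Sum>j\<in>{1..2*m}. cdf q j)"
      using sQ v1pos by (intro mult_left_mono) auto
    thus ?thesis using ma sum_u_odd[where n=m and v=v1 and q=q] by linarith
  qed
  have eqs: "\<forall>i<m. u v1 q (2*i+1) = a"
  proof -
    have "\<forall>i<m. (\<lambda>_. a) i = (\<lambda>i. u v1 q (2*i+1)) i"
      by (rule sum_eq_bound) (use dev1 sumu2 in auto)
    thus ?thesis by simp
  qed
  have sQe: "(\<Sum>j\<in>{1..2*m}. cdf q j) = 2 * real m - b"
  proof -
    have "v1 / 2 * (\<Sum>j\<in>{1..2*m}. cdf q j) \<le> v1 / 2 * (2 * real m - b)"
      using sumu ma sum_u_odd[where n=m and v=v1 and q=q] by linarith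
    hence "(\<Sum>j\<in>{1..2*m}. cdf q j) \<le> 2 * real m - b" using v1pos by simp
    thus ?thesis using sQ by simp
  qed
  have c1: "cdf q (2*m+1) \<ge> 1"
  proof -
    have "(\<Sum>j\<in>{1..2*m+1}. 1 - cdf q j) \<le> b" using mean_bound[OF sq, of "2*m+1"] mq by simp
    moreover have "(\<Sum>j\<in>{1..2*m+1}. 1 - cdf q j) = (\<Sum>j\<in>{1..2*m}. 1 - cdf q j) + (1 - cdf q (2*m+1))"
      by simp
    moreover have "(\<Sum>j\<in>{1..2*m}. 1 - cdf q j) = b" using sQe by (simp add: sum_subtractf)
    ultimately show ?thesis by simp
  qed
  have supp: "\<forall>k>2*m. q k = 0"
  proof (intro allI impI)
    fix k assume k: "k > 2*m"
    have "cdf q k \<ge> 1" using c1 cdf_mono[OF sq, of "2*m+1" k] k by simp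
    moreover have "cdf q (Suc k) \<le> 1" by (rule cdf_le1[OF sq])
    ultimately have "q k \<le> 0" by (simp add: cdf_Suc)
    thus "q k = 0" using strat_nonneg[OF sq, of k] by simp
  qed
  have "cdf q (2*m+1) = 1" using c1 cdf_le1[OF sq, of "2*m+1"] by simp
  thus ?thesis using v2m cz pUO aval dev1 eqs supp by (simp add: a_def c_def)
qed


definition Fq :: "real \<Rightarrow> nat \<Rightarrow> real \<Rightarrow> real \<Rightarrow> real \<Rightarrow> (nat \<Rightarrow> real) \<Rightarrow> nat \<Rightarrow> real" where
  "Fq b m lO lE lU l = (\<lambda>n. (1 - b / real m) * delta 0 n + b / real m *
                       (lO * UO m n + lE * UE m n + lU * UOup m n
                        + (\<Sum>j=1..m-1. l j * W m j n)))"

lemma W_sum_0: "(\<Sum>j=1..m-1. l j * W m j 0) = (\<Sum>j=1..m-1. l j) / (2 * real m)"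
  by (simp add: W_def sum_divide_distrib)

lemma W_sum_odd:
  assumes "i < m"
  shows "(\<Sum>j=1..m-1. l j * W m j (2*i+1)) = (\<Sum>j=1..i. l j) / real m"
proof -
  have "(\<Sum>j=1..m-1. l j * W m j (2*i+1)) = (\<Sum>j\<in>{1..m-1}. if j \<le> i then l j / real m else 0)"
    using assms by (intro sum.cong) (auto simp: W_def)
  also have "\<dots> = (\<Sum>j\<in>{j\<in>{1..m-1}. j \<le> i}. l j / real m)"
    by (rule sum.inter_filter[symmetric]) simp
  also have "{j\<in>{1..m-1}. j \<le> i} = {1..i}" using assms by auto
  finally show ?thesis by (simp add: sum_divide_distrib)
qed

lemma W_sum_even:
  assumes "1 \<le> i" "i \<le> m - 1"
  shows "(\<Sum>j=1..m-1. l j * W m j (2*i)) = (\<Sum>j=i+1..m-1. l j) / real m + l i / (2 * real m)"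
proof -
  have "(\<Sum>j=1..m-1. l j * W m j (2*i)) =
        (\<Sum>j\<in>{1..m-1}. (if i < j then l j / real m else 0) + (if j = i then l i / (2 * real m) else 0))"
    using assms by (intro sum.cong) (auto simp: W_def)
  also have "\<dots> = (\<Sum>j\<in>{1..m-1}. if i < j then l j / real m else 0) + (\<Sum>j\<in>{1..m-1}. if j = i then l i / (2 * real m) else 0)"
    by (rule sum.distrib)
  also have "(\<Sum>j\<in>{1..m-1}. if i < j then l j / real m else 0) = (\<Sum>j\<in>{j\<in>{1..m-1}. i < j}. l j / real m)"
    by (rule sum.inter_filter[symmetric]) simp
  also have "{j\<in>{1..m-1}. i < j} = {i+1..m-1}" using assms by auto
  also have "(\<Sum>j\<in>{1..m-1}. if j = i then l i / (2 * real m) else 0) = l i / (2 * real m)"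
    using assms by (simp add: sum.delta')
  finally show ?thesis by (simp add: sum_divide_distrib)
qed

lemma W_sum_big:
  assumes "n \<ge> 2*m" "m \<ge> 1"
  shows "(\<Sum>j=1..m-1. l j * W m j n) = 0"
  using assms by (intro sum.neutral) (auto simp: W_def)

lemma Fq_0: "m \<ge> 2 \<Longrightarrow> Fq b m lO lE lU l 0 = (1 - b / real m) + b / real m * (lE / (real m + 1) + (\<Sum>j=1..m-1. l j) / (2 * real m))"
  unfolding Fq_def W_sum_0 by (simp add: delta_def UO_def UE_def UOup_def)

lemma Fq_odd: assumes "m \<ge> 2" "i < m" shows "Fq b m lO lE lU l (2*i+1) = b / m * (lO / m + (\<Sum>j=1..i. l j) / m)"
proof -
  have "2*i+1 \<le> 2*m - 1" using assms by simp
  thus ?thesis unfolding Fq_def W_sum_odd[OF assms(2)] by (simp add: delta_def UO_def UE_def UOup_def)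
qed

lemma Fq_even: assumes "m \<ge> 2" "1 \<le> i" "i \<le> m - 1" shows "Fq b m lO lE lU l (2*i) =
   b / real m * (lE / (real m + 1) + lU / (real m - 1) + (\<Sum>j=i+1..m-1. l j) / real m + l i / (2 * real m))"
proof -
  have "2*i \<le> 2*m - 2" "2*i \<le> 2*m" "2 \<le> 2*i" "2*i \<noteq> 0" "real (m - 1) = real m - 1" using assms by auto
  thus ?thesis unfolding Fq_def W_sum_even[OF assms(2,3)] by (simp add: delta_def UO_def UE_def UOup_def)
qed

lemma Fq_2m: assumes "m \<ge> 2" shows "Fq b m lO lE lU l (2*m) = b / real m * (lE / (real m + 1))"
proof -
  have "\<not> 2*m \<le> 2*m - 2" "2*m \<noteq> 0" "2*m \<ge> 2*m" "m \<ge> 1" using assms by auto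
  thus ?thesis unfolding Fq_def W_sum_big[OF \<open>2*m \<ge> 2*m\<close> \<open>m \<ge> 1\<close>] by (simp add: delta_def UO_def UE_def UOup_def)
qed

lemma Fq_big: assumes "m \<ge> 2" "n > 2*m" shows "Fq b m lO lE lU l n = 0"
proof -
  have "\<not> n \<le> 2*m - 2" "\<not> n \<le> 2*m - 1" "\<not> n \<le> 2*m" "n \<noteq> 0" "n \<ge> 2*m" "m \<ge> 1" using assms by auto
  thus ?thesis unfolding Fq_def W_sum_big[OF \<open>n \<ge> 2*m\<close> \<open>m \<ge> 1\<close>] by (simp add: delta_def UO_def UE_def UOup_def)
qed


lemma sum_split_l:
  fixes i m :: nat
  assumes "i + 1 \<le> m - 1"
  shows "(\<Sum>j=1..m-1. l j) = (\<Sum>j=1..i+1. (l j :: real)) + (\<Sum>j=i+2..m-1. l j)"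
proof -
  have "{1..m-1} = {1..i+1} \<union> {i+2..m-1}" using assms by auto
  thus ?thesis by (simp add: sum.union_disjoint)
qed

lemma key_K:
  fixes m :: nat and v1 b lO lE lU L :: real
  assumes m: "m \<ge> 2" and v1: "v1 > 0" and b: "b > 0"
    and Hs: "lO + lE + lU + L = 1"
    and Hg: "lU / (real m - 1) - lE / (real m + 1) = (2 * real m)^2 / (2 * v1 * b) - 1"
  shows "(lO + L) / real m + lE / (real m + 1) + lU / (real m - 1) = 2 * real m / (v1 * b)"
proof -
  define M where "M = real m"
  define A where "A = lU / (M - 1)"
  define B where "B = lE / (M + 1)"
  have M: "M > 1" using m by (simp add: M_def)
  have nz: "M \<noteq> 0" "v1 \<noteq> 0" "b \<noteq> 0" using M v1 b by auto
  have lU: "lU = (M - 1) * A" using M by (simp add: A_def)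
  have lE: "lE = (M + 1) * B" using M by (simp add: B_def)
  have g: "A - B = (2 * M)^2 / (2 * v1 * b) - 1" using Hg by (simp add: A_def B_def M_def)
  have L: "lO + L = 1 - (M + 1) * B - (M - 1) * A" using Hs lU lE by simp
  have "(lO + L) / M + B + A = (1 + (A - B)) / M" unfolding L using nz by (simp add: field_simps)
  also have "\<dots> = 2 * M / (v1 * b)" unfolding g using nz by (simp add: field_simps power2_eq_square)
  finally show ?thesis by (simp add: A_def B_def M_def)
qed

lemma Fq_R:
  fixes m :: nat and v1 b lO lE lU :: real
  assumes m: "m \<ge> 2" and v1: "v1 > 0" and b: "b > 0" and i: "i + 1 < m"
    and Hs: "lO + lE + lU + (\<Sum>j=1..m-1. l j) = 1"
    and Hg: "lU / (real m - 1) - lE / (real m + 1) = (2 * real m)^2 / (2 * v1 * b) - 1"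
  shows "Fq b m lO lE lU l (2*i+1) + 2 * Fq b m lO lE lU l (2*(i+1)) + Fq b m lO lE lU l (2*(i+1)+1) = 4 / v1"
proof -
  define M where "M = real m"
  define A where "A = lU / (M - 1)"
  define B where "B = lE / (M + 1)"
  have nz: "M \<noteq> 0" "v1 \<noteq> 0" "b \<noteq> 0" using m v1 b by (auto simp: M_def)
  define L where "L = (\<Sum>j=1..m-1. l j)"
  define S where "S = (\<Sum>j=1..i. l j)"
  define T where "T = (\<Sum>j=i+2..m-1. l j)"
  have S1: "(\<Sum>j=1..i+1. l j) = S + l (i+1)" by (simp add: S_def)
  have LT: "L = S + l (i+1) + T" using sum_split_l[of i m l] i S1 by (simp add: L_def T_def)
  have e1: "Fq b m lO lE lU l (2*i+1) = b / M * (lO / M + S / M)" using Fq_odd[OF m, of i] i by (simp add: S_def M_def)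
  have e2: "Fq b m lO lE lU l (2*(i+1)) = b / M * (B + A + T / M + l (i+1) / (2 * M))"
    using Fq_even[OF m, of "i+1"] i by (simp add: T_def M_def A_def B_def)
  have e3: "Fq b m lO lE lU l (2*(i+1)+1) = b / M * (lO / M + (S + l (i+1)) / M)"
    using Fq_odd[OF m, of "i+1"] i S1 by (simp add: S_def M_def)
  have K: "(lO + L) / M + B + A = 2 * M / (v1 * b)"
    using key_K[OF m v1 b _ Hg, of lO L] Hs by (simp add: L_def M_def A_def B_def)
  have "Fq b m lO lE lU l (2*i+1) + 2 * Fq b m lO lE lU l (2*(i+1)) + Fq b m lO lE lU l (2*(i+1)+1)
        = 2 * (b / M) * ((lO + L) / M + B + A)"
    unfolding e1 e2 e3 LT using nz by (simp add: field_simps)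
  also have "\<dots> = 4 / v1" unfolding K using nz by (simp add: field_simps)
  finally show ?thesis .
qed

lemma Fq_diff:
  assumes m: "m \<ge> 2" and i: "i + 1 < m"
  shows "Fq b m lO lE lU l (2*(i+1)+1) - Fq b m lO lE lU l (2*i+1) = b / (real m)^2 * l (i+1)"
proof -
  have e1: "Fq b m lO lE lU l (2*i+1) = b / real m * (lO / real m + (\<Sum>j=1..i. l j) / real m)" using Fq_odd[OF m, of i] i by simp
  have e3: "Fq b m lO lE lU l (2*(i+1)+1) = b / real m * (lO / real m + ((\<Sum>j=1..i. l j) + l (i+1)) / real m)"
    using Fq_odd[OF m, of "i+1"] i by simp
  show ?thesis unfolding e1 e3 using m by (simp add: field_simps power2_eq_square)
qed

lemma Fq_top:
  fixes m :: nat and v1 b lO lE lU :: real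
  assumes m: "m \<ge> 2" and v1: "v1 > 0" and b: "b > 0"
    and Hs: "lO + lE + lU + (\<Sum>j=1..m-1. l j) = 1"
    and Hg: "lU / (real m - 1) - lE / (real m + 1) = (2 * real m)^2 / (2 * v1 * b) - 1"
  shows "Fq b m lO lE lU l (2*(m-1)+1) + Fq b m lO lE lU l (2*m) = 2 / v1 - b / real m * (lU / (real m - 1))"
proof -
  define M where "M = real m"
  define A where "A = lU / (M - 1)"
  define B where "B = lE / (M + 1)"
  have nz: "M \<noteq> 0" "v1 \<noteq> 0" "b \<noteq> 0" using m v1 b by (auto simp: M_def)
  define L where "L = (\<Sum>j=1..m-1. l j)"
  have e1: "Fq b m lO lE lU l (2*(m-1)+1) = b / M * (lO / M + L / M)" using Fq_odd[OF m, of "m-1"] m by (simp add: L_def M_def)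
  have e2: "Fq b m lO lE lU l (2*m) = b / M * B" using Fq_2m[OF m] by (simp add: M_def B_def)
  have K: "(lO + L) / M + B + A = 2 * M / (v1 * b)"
    using key_K[OF m v1 b _ Hg, of lO L] Hs by (simp add: L_def M_def A_def B_def)
  have K2: "(lO + L) / M + B = 2 * M / (v1 * b) - A" using K by simp
  have "Fq b m lO lE lU l (2*(m-1)+1) + Fq b m lO lE lU l (2*m) = b / M * ((lO + L) / M + B)"
    unfolding e1 e2 using nz by (simp add: field_simps)
  also have "\<dots> = b / M * (2 * M / (v1 * b) - A)" unfolding K2 ..
  also have "\<dots> = 2 / v1 - b / M * A" using nz by (simp add: field_simps)
  finally show ?thesis by (simp add: M_def A_def)
qed

lemma Fq_E1:
  fixes m :: nat and v1 b lO lE lU :: real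
  assumes m: "m \<ge> 2" and v1: "v1 > 0" and b: "b > 0"
    and Hs: "lO + lE + lU + (\<Sum>j=1..m-1. l j) = 1"
    and Hg: "lU / (real m - 1) - lE / (real m + 1) = (2 * real m)^2 / (2 * v1 * b) - 1"
  shows "Fq b m lO lE lU l 0 + Fq b m lO lE lU l 1 / 2 = 1 - b / (2 * real m) - (real m - 1) / v1"
proof -
  define M where "M = real m"
  define A where "A = lU / (M - 1)"
  define B where "B = lE / (M + 1)"
  have M: "M > 1" using m by (simp add: M_def)
  have nz: "M \<noteq> 0" "v1 \<noteq> 0" "b \<noteq> 0" using M v1 b by auto
  have lU: "lU = (M - 1) * A" using M by (simp add: A_def)
  have lE: "lE = (M + 1) * B" using M by (simp add: B_def)
  have g: "A = B + (2 * M)^2 / (2 * v1 * b) - 1" using Hg by (simp add: A_def B_def M_def)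
  define L where "L = (\<Sum>j=1..m-1. l j)"
  have e0: "Fq b m lO lE lU l 0 = (1 - b / M) + b / M * (B + L / (2 * M))"
    using Fq_0[OF m] by (simp add: L_def M_def B_def)
  have e1: "Fq b m lO lE lU l 1 = b / M * (lO / M)" using Fq_odd[OF m, of 0] m by (simp add: M_def)
  have L: "L = 1 - lO - (M + 1) * B - (M - 1) * A" using Hs lU lE by (simp add: L_def)
  have "Fq b m lO lE lU l 0 + Fq b m lO lE lU l 1 / 2 = 1 - b / (2 * M) - (M - 1) / v1"
    unfolding e0 e1 L g using nz by (simp add: field_simps power2_eq_square)
  thus ?thesis by (simp add: M_def)
qed


lemma u_step: "u v q (Suc k) = u v q k + v * (q k + q (Suc k)) / 2 - 1"
  by (simp add: u_def cdf_Suc field_simps)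

lemma cdf_UO: "m \<ge> 1 \<Longrightarrow> cdf (UO m) k = real (min (k div 2) m) / real m"
proof (induction k)
  case 0 then show ?case by simp
next
  case (Suc k)
  show ?case
  proof (cases "even k")
    case True
    then have "Suc k div 2 = k div 2" by presburger
    then show ?thesis using Suc True by (simp add: cdf_Suc UO_def)
  next
    case False
    then have d: "Suc k div 2 = k div 2 + 1" by presburger
    show ?thesis
    proof (cases "k div 2 < m")
      case True
      hence "k \<le> 2 * m - 1" using False by presburger
      hence "UO m k = 1 / real m" using False by (simp add: UO_def)
      moreover have "min (Suc k div 2) m = min (k div 2) m + 1" using d True by simp
      ultimately show ?thesis using Suc by (simp add: cdf_Suc add_divide_distrib)
    next
      case nt: False
      hence "\<not> k \<le> 2 * m - 1" using False by presburger
      hence "UO m k = 0" by (simp add: UO_def)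
      moreover have "min (Suc k div 2) m = min (k div 2) m" using d nt by simp
      ultimately show ?thesis using Suc by (simp add: cdf_Suc)
    qed
  qed
qed

lemma u2_UO:
  assumes m: "m \<ge> 1"
  shows "u (2 * real m) (UO m) k \<le> 0" and "k \<le> 2 * m \<Longrightarrow> u (2 * real m) (UO m) k = 0"
proof -
  have mpos: "real m > 0" using m by simp
  have c: "cdf (UO m) k = real (min (k div 2) m) / real m" by (rule cdf_UO[OF m])
  have key: "u (2 * real m) (UO m) k = (if k \<le> 2 * m then 0 else 2 * real m - real k)"
  proof (cases "k \<le> 2 * m")
    case True
    show ?thesis
    proof (cases "even k")
      case ev: True
      then obtain j where k: "k = 2 * j" by blast
      have "j \<le> m" using True k by simp
      hence "cdf (UO m) k = real j / real m" using c k by simp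
      moreover have "UO m k = 0" using ev by (simp add: UO_def)
      ultimately show ?thesis using True k mpos by (simp add: u_def)
    next
      case od: False
      then obtain j where k: "k = 2 * j + 1" using oddE by blast
      have "j < m" using True k by simp
      hence "cdf (UO m) k = real j / real m" using c k by simp
      moreover have "UO m k = 1 / real m" using od True k \<open>j < m\<close> by (simp add: UO_def)
      ultimately show ?thesis using True k mpos by (simp add: u_def field_simps)
    qed
  next
    case False
    hence "k div 2 \<ge> m" by simp
    hence "cdf (UO m) k = 1" using c mpos by simp
    moreover have "UO m k = 0" using False by (auto simp: UO_def)
    ultimately show ?thesis using False by (simp add: u_def)
  qed
  show "u (2 * real m) (UO m) k \<le> 0" using key by simp
  show "k \<le> 2 * m \<Longrightarrow> u (2 * real m) (UO m) k = 0" using key by simp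
qed


lemma if_direction:
  fixes v1 v2 b :: real and m :: nat and p q :: "nat \<Rightarrow> real"
  assumes m: "m \<ge> 2" and v1: "v1 > 0" and v2: "v2 = 2 * real m" and b: "0 < b" "b < real m"
    and sp: "strategy p" and sq: "strategy q" and pU: "p = UO m"
    and l0: "0 \<le> lO" "0 \<le> lE" "0 \<le> lU" "\<forall>j\<in>{1..m-1}. 0 \<le> l j"
    and Hs: "lO + lE + lU + (\<Sum>j=1..m-1. l j) = 1"
    and Hg: "lU / (real m - 1) - lE / (real m + 1) = (2 * real m)^2 / (2 * v1 * b) - 1"
    and Hb: "lO \<ge> 2 * real m / (2 * b) * (2 * real m * (2 * real m + 2) / (2 * v1) + b - 2 * real m)"
    and qF: "q = Fq b m lO lE lU l"
  shows "nash v1 v2 p q \<and> payoff v2 q p = 0"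
proof -
  have m1: "m \<ge> 1" using m by simp
  have mpos: "real m > 0" using m by simp
  let ?u = "u v1 q"
  have R: "\<forall>i. i + 1 < m \<longrightarrow> q (2*i+1) + 2 * q (2*(i+1)) + q (2*(i+1)+1) = 4 / v1"
    using Fq_R[OF m v1 b(1) _ Hs Hg] qF by simp
  have D: "\<forall>i. i + 1 < m \<longrightarrow> q (2*(i+1)+1) - q (2*i+1) \<ge> 0"
  proof (intro allI impI)
    fix i assume i: "i + 1 < m"
    have "q (2*(i+1)+1) - q (2*i+1) = b / (real m)^2 * l (i+1)" using Fq_diff[OF m i] qF by simp
    moreover have "l (i+1) \<ge> 0" using l0(4) i by simp
    ultimately show "q (2*(i+1)+1) - q (2*i+1) \<ge> 0" using b by simp
  qed
  have uodd: "\<forall>i<m. ?u (2*i+1) = ?u 1"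
  proof (intro allI impI)
    fix i assume "i < m"
    then show "?u (2*i+1) = ?u 1"
    proof (induction i)
      case 0 then show ?case by simp
    next
      case (Suc i)
      have "?u (2*(i+1)+1) = ?u (2*i+1) + v1 * (q (2*i+1) + 2 * q (2*(i+1)) + q (2*(i+1)+1)) / 2 - 2"
      proof -
        have "2*(i+1)+1 = Suc (Suc (2*i+1))" "2*(i+1) = Suc (2*i+1)" by simp_all
        thus ?thesis by (simp add: u_step field_simps)
      qed
      also have "\<dots> = ?u (2*i+1)" using R Suc.prems v1 by simp
      finally show ?case using Suc by simp
    qed
  qed
  have ueven: "\<forall>i<m. ?u (2*i+2) \<le> ?u (2*i+1)"
  proof (intro allI impI)
    fix i assume i: "i < m"
    have s: "q (2*i+1) + q (2*i+2) \<le> 2 / v1"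
    proof (cases "i + 1 < m")
      case True
      have e: "2*(i+1)+1 = 2*i+3" "2*(i+1) = 2*i+2" by simp_all
      have eq: "q (2*i+1) + 2 * q (2*i+2) + q (2*i+3) = 4 / v1" using R[rule_format, OF True] by (simp add: eval_nat_numeral)
      have dd: "q (2*i+3) - q (2*i+1) \<ge> 0" using D[rule_format, OF True] by (simp add: eval_nat_numeral)
      define x1 where "x1 = q (2*i+1)"
      define x2 where "x2 = q (2*i+2)"
      define x3 where "x3 = q (2*i+3)"
      have "x1 + 2 * x2 + x3 = 4 / v1" "0 \<le> x3 - x1" using eq dd by (simp_all add: x1_def x2_def x3_def)
      hence "x1 + x2 \<le> 2 / v1" by (simp add: field_simps)
      thus ?thesis by (simp add: x1_def x2_def)
    next
      case False
      hence im: "i = m - 1" using i by simp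
      have "q (2*(m-1)+1) + q (2*m) = 2 / v1 - b / real m * (lU / (real m - 1))"
        using Fq_top[OF m v1 b(1) Hs Hg] qF by simp
      moreover have "b / real m * (lU / (real m - 1)) \<ge> 0" using b l0(3) m by simp
      moreover have "2*i+2 = 2*m" using im m by simp
      ultimately show ?thesis using im by simp
    qed
    have "2*i+2 = Suc (2*i+1)" by simp
    thus "?u (2*i+2) \<le> ?u (2*i+1)" using s v1 by (simp add: u_step field_simps)
  qed
  have u0: "?u 0 \<le> ?u 1"
  proof -
    have E1: "q 0 + q 1 / 2 = 1 - b / (2 * real m) - (real m - 1) / v1"
      using Fq_E1[OF m v1 b(1) Hs Hg] qF by simp
    have q1: "q 1 = b / real m * (lO / real m)" using Fq_odd[OF m, of 0] qF m by simp
    have "lO * b \<ge> 2 * real m ^ 2 * ((real m + 1) / v1 - 1 + b / (2 * real m))"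
    proof -
      have "2 * real m / (2 * b) * (2 * real m * (2 * real m + 2) / (2 * v1) + b - 2 * real m)
            = 2 * real m ^ 2 * ((real m + 1) / v1 - 1 + b / (2 * real m)) / b"
        using mpos b v1 by (simp add: field_simps power2_eq_square)
      thus ?thesis using Hb b(1) by (simp add: pos_divide_le_eq)
    qed
    hence "q 1 / 2 \<ge> (real m + 1) / v1 - 1 + b / (2 * real m)"
      unfolding q1 using mpos b(1) by (simp add: field_simps power2_eq_square)
    hence "q 0 + q 1 \<ge> 2 / v1" using E1 v1 by (simp add: field_simps)
    thus ?thesis using v1 by (simp add: u_step field_simps)
  qed
  have ubig: "\<forall>k\<ge>2*m. ?u k \<le> ?u (2*m)"
  proof (intro allI impI)
    fix k assume "k \<ge> 2*m"
    then show "?u k \<le> ?u (2*m)"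
    proof (induction k rule: dec_induct)
      case base then show ?case by simp
    next
      case (step n)
      have "q (Suc n) = 0" using Fq_big[OF m] qF step by simp
      moreover have "q n \<le> 2 / v1"
      proof (cases "n = 2*m")
        case True
        have "q (2*(m-1)+1) + q (2*m) \<le> 2 / v1"
        proof -
          have "q (2*(m-1)+1) + q (2*m) = 2 / v1 - b / real m * (lU / (real m - 1))"
            using Fq_top[OF m v1 b(1) Hs Hg] qF by simp
          moreover have "b / real m * (lU / (real m - 1)) \<ge> 0" using b l0(3) m by simp
          ultimately show ?thesis by simp
        qed
        moreover have "q (2*(m-1)+1) \<ge> 0" using strat_nonneg[OF sq] .
        ultimately show ?thesis using True by simp
      next
        case False
        hence "q n = 0" using Fq_big[OF m] qF step by simp
        thus ?thesis using v1 by simp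
      qed
      ultimately have "?u (Suc n) \<le> ?u n" using v1 by (simp add: u_step field_simps)
      thus ?case using step by simp
    qed
  qed
  have uall: "\<forall>k. ?u k \<le> ?u 1"
  proof
    fix k
    show "?u k \<le> ?u 1"
    proof (cases "k \<ge> 2*m")
      case True
      have h: "?u (2*(m-1)+2) \<le> ?u (2*(m-1)+1)" by (rule ueven[rule_format]) (use m in simp)
      have e: "2*(m-1)+2 = 2*m" using m by simp
      have "?u (2*m) \<le> ?u (2*(m-1)+1)" using h by (simp only: e)
      also have "\<dots> = ?u 1" using uodd m by simp
      finally show ?thesis using ubig True by fastforce
    next
      case False
      show ?thesis
      proof (cases "k = 0")
        case True then show ?thesis using u0 by simp
      next
        case nz: False
        show ?thesis
        proof (cases "odd k")
          case True
          then obtain i where k: "k = 2*i+1" using oddE by blast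
          then have "i < m" using False by simp
          then show ?thesis using uodd k by simp
        next
          case ev: False
          define i where "i = k div 2 - 1"
          have k: "k = 2*i+2" using ev nz unfolding i_def by presburger
          then have i: "i < m" using False by simp
          have "?u k \<le> ?u (2*i+1)" using ueven i k by simp
          also have "\<dots> = ?u 1" using uodd i by simp
          finally show ?thesis .
        qed
      qed
    qed
  qed
  have pay1: "payoff v1 p q = ?u 1"
  proof (rule payoff_const[OF sp sq])
    fix k
    show "p k * ?u k = p k * ?u 1"
    proof (cases "odd k \<and> k \<le> 2*m - 1")
      case True
      then obtain i where k: "k = 2*i+1" using oddE by blast
      then have "i < m" using True m by simp
      then show ?thesis using uodd k by simp
    next
      case False
      then have "p k = 0" using pU by (auto simp: UO_def)
      then show ?thesis by simp
    qed
  qed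
  have u2le: "\<forall>k. u v2 p k \<le> 0" using u2_UO(1)[OF m1] pU v2 by simp
  have pay2: "payoff v2 q p = 0"
  proof (rule payoff_const[OF sq sp])
    fix k
    show "q k * u v2 p k = q k * 0"
    proof (cases "k \<le> 2*m")
      case True then show ?thesis using u2_UO(2)[OF m1] pU v2 by simp
    next
      case False then show ?thesis using Fq_big[OF m] qF by simp
    qed
  qed
  have "nash v1 v2 p q"
    unfolding nash_def
  proof (intro conjI allI impI sp sq)
    fix p' assume "strategy p'"
    show "payoff v1 p' q \<le> payoff v1 p q" unfolding pay1
      by (rule payoff_le[OF \<open>strategy p'\<close> sq]) (use uall in auto)
  next
    fix q' assume "strategy q'"
    show "payoff v2 q' p \<le> payoff v2 q p" unfolding pay2
      by (rule payoff_le[OF \<open>strategy q'\<close> sp]) (use u2le in auto)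
  qed
  thus ?thesis using pay2 by simp
qed


lemma only_if_q:
  fixes v1 b a :: real and m :: nat and q :: "nat \<Rightarrow> real"
  assumes m: "m \<ge> 2" and v1: "v1 > 0" and b: "0 < b" "b < real m" and sq: "strategy q"
    and av: "a = v1 - real m - v1 * b / (2 * real m)"
    and U1: "\<forall>k. u v1 q k \<le> a" and U2: "\<forall>i<m. u v1 q (2*i+1) = a"
    and Z: "\<forall>k>2*m. q k = 0" and C: "cdf q (2*m+1) = 1"
  shows "2 * real m * (2 * real m - 2) / (2 * v1) \<le> b \<and> b \<le> 2 * real m * (2 * real m + 2) / (2 * v1) \<and>
    (\<exists>lO lE lU l. 0 \<le> lO \<and> 0 \<le> lE \<and> 0 \<le> lU \<and> (\<forall>j\<in>{1..m-1}. 0 \<le> l j) \<and>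
       lO + lE + lU + (\<Sum>j=1..m-1. l j) = 1 \<and>
       lU / (real m - 1) - lE / (real m + 1) = (2 * real m)^2 / (2 * v1 * b) - 1 \<and>
       lO \<ge> 2 * real m / (2 * b) * (2 * real m * (2 * real m + 2) / (2 * v1) + b - 2 * real m) \<and>
       q = Fq b m lO lE lU l)"
proof -
  define M where "M = real m"
  have M: "M \<ge> 2" using m by (simp add: M_def)
  have nz: "M \<noteq> 0" "v1 \<noteq> 0" "b \<noteq> 0" "M - 1 \<noteq> 0" "M + 1 \<noteq> 0" using M v1 b by auto
  let ?u = "u v1 q"
  have u1a: "?u 1 = a" using U2[rule_format, of 0] m by simp
  have qa: "\<forall>i. i + 1 < m \<longrightarrow> q (2*i+1) + 2 * q (2*(i+1)) + q (2*(i+1)+1) = 4 / v1"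
  proof (intro allI impI)
    fix i assume i: "i + 1 < m"
    have "?u (2*(i+1)+1) = ?u (2*i+1) + v1 * (q (2*i+1) + 2 * q (2*(i+1)) + q (2*(i+1)+1)) / 2 - 2"
    proof -
      have "2*(i+1)+1 = Suc (Suc (2*i+1))" "2*(i+1) = Suc (2*i+1)" by simp_all
      thus ?thesis by (simp add: u_step field_simps)
    qed
    moreover have "?u (2*(i+1)+1) = a" "?u (2*i+1) = a" using U2 i by auto
    ultimately have "v1 * (q (2*i+1) + 2 * q (2*(i+1)) + q (2*(i+1)+1)) = 4" by simp
    thus "q (2*i+1) + 2 * q (2*(i+1)) + q (2*(i+1)+1) = 4 / v1" using v1 by (simp add: field_simps)
  qed
  have qb: "\<forall>i<m. q (2*i+1) + q (2*i+2) \<le> 2 / v1"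
  proof (intro allI impI)
    fix i assume i: "i < m"
    have "2*i+2 = Suc (2*i+1)" by simp
    hence "?u (2*i+2) = ?u (2*i+1) + v1 * (q (2*i+1) + q (2*i+2)) / 2 - 1" by (simp add: u_step)
    moreover have "?u (2*i+2) \<le> a" "?u (2*i+1) = a" using U1 U2 i by auto
    ultimately have "v1 * (q (2*i+1) + q (2*i+2)) \<le> 2" by simp
    thus "q (2*i+1) + q (2*i+2) \<le> 2 / v1" using v1 by (simp add: field_simps)
  qed
  have qc: "q 0 + q 1 \<ge> 2 / v1"
  proof -
    have "?u 1 = ?u 0 + v1 * (q 0 + q 1) / 2 - 1" using u_step[of v1 q 0] by simp
    moreover have "?u 0 \<le> a" "?u 1 = a" using U1 u1a by auto
    ultimately have "v1 * (q 0 + q 1) \<ge> 2" by simp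
    thus ?thesis using v1 by (simp add: field_simps)
  qed
  have qd: "q 0 + q 1 / 2 = 1 - b / (2 * M) - (M - 1) / v1"
  proof -
    have "?u 1 = a" by (rule u1a)
    hence "v1 * (q 0 + q 1 / 2) - 1 = a" by (simp add: u_def cdf_def)
    thus ?thesis unfolding av using nz by (simp add: field_simps M_def)
  qed
  have qe: "q (2*(m-1)+1) + 2 * q (2*m) = b / M - 2 * (M - 1) / v1"
  proof -
    have e: "2*m+1 = Suc (Suc (2*(m-1)+1))" "2*m = Suc (2*(m-1)+1)" using m by simp_all
    have cd: "cdf q (2*(m-1)+1) = 1 - q (2*(m-1)+1) - q (2*m)"
      using C unfolding e by (simp add: cdf_Suc)
    have "?u (2*(m-1)+1) = a" using U2 m by auto
    hence "v1 * (cdf q (2*(m-1)+1) + q (2*(m-1)+1) / 2) - real (2*(m-1)+1) = a" unfolding u_def .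
    hence "v1 * (1 - q (2*(m-1)+1) / 2 - q (2*m)) - real (2*(m-1)+1) = a" unfolding cd by (simp add: algebra_simps)
    moreover have "real (2*(m-1)+1) = 2 * M - 1" using m by (simp add: M_def)
    ultimately show ?thesis unfolding av using nz by (simp add: field_simps M_def)
  qed
  define lO where "lO = M^2 * q 1 / b"
  define l where "l = (\<lambda>j. M^2 * (q (2*j+1) - q (2*j-1)) / b)"
  define lE where "lE = M * (M + 1) * q (2*m) / b"
  define lU where "lU = (M - 1) * ((2 * M)^2 / (2 * v1 * b) - 1 + lE / (M + 1))"
  have lEM: "lE / (M + 1) = M * q (2*m) / b" using nz by (simp add: lE_def)
  have tel: "\<forall>i<m. lO + (\<Sum>j=1..i. l j) = M^2 * q (2*i+1) / b"
  proof (intro allI impI)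
    fix i assume "i < m"
    then show "lO + (\<Sum>j=1..i. l j) = M^2 * q (2*i+1) / b"
    proof (induction i)
      case 0 then show ?case by (simp add: lO_def)
    next
      case (Suc i)
      have "lO + (\<Sum>j=1..Suc i. l j) = (lO + (\<Sum>j=1..i. l j)) + l (Suc i)" by simp
      also have "\<dots> = M^2 * q (2*i+1) / b + M^2 * (q (2*Suc i+1) - q (2*i+1)) / b"
        using Suc by (simp add: l_def)
      also have "\<dots> = M^2 * q (2*Suc i+1) / b" by (simp add: diff_divide_distrib right_diff_distrib)
      finally show ?case .
    qed
  qed
  have LT: "lO + (\<Sum>j=1..m-1. l j) = M^2 * q (2*(m-1)+1) / b" using tel m by simp
  have Hs: "lO + lE + lU + (\<Sum>j=1..m-1. l j) = 1"
  proof -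
    have "lO + lE + lU + (\<Sum>j=1..m-1. l j) = M^2 * q (2*(m-1)+1) / b + lE + lU" using LT by simp
    also have "\<dots> = M^2 / b * (q (2*(m-1)+1) + 2 * q (2*m)) + 2 * M^2 * (M - 1) / (v1 * b) - (M - 1)"
    proof -
      show ?thesis unfolding lU_def lEM unfolding lE_def using nz by (simp add: field_simps power2_eq_square)
    qed
    also have "\<dots> = 1" unfolding qe using nz by (simp add: field_simps power2_eq_square)
    finally show ?thesis .
  qed
  have Hg: "lU / (real m - 1) - lE / (real m + 1) = (2 * real m)^2 / (2 * v1 * b) - 1"
  proof -
    have "lU / (M - 1) = (2 * M)^2 / (2 * v1 * b) - 1 + lE / (M + 1)"
      unfolding lU_def using nz(4) by simp
    thus ?thesis by (simp add: M_def)
  qed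
  have oddq: "\<forall>i<m. Fq b m lO lE lU l (2*i+1) = q (2*i+1)"
  proof (intro allI impI)
    fix i assume i: "i < m"
    have "Fq b m lO lE lU l (2*i+1) = b / M * (lO / M + (\<Sum>j=1..i. l j) / M)" using Fq_odd[OF m i] by (simp add: M_def)
    also have "\<dots> = b / M^2 * (lO + (\<Sum>j=1..i. l j))" using nz by (simp add: field_simps power2_eq_square)
    also have "\<dots> = q (2*i+1)" using tel i nz by (simp add: field_simps power2_eq_square)
    finally show "Fq b m lO lE lU l (2*i+1) = q (2*i+1)" .
  qed
  have FR: "\<forall>i. i + 1 < m \<longrightarrow> Fq b m lO lE lU l (2*i+1) + 2 * Fq b m lO lE lU l (2*(i+1)) + Fq b m lO lE lU l (2*(i+1)+1) = 4 / v1"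
    using Fq_R[OF m v1 b(1) _ Hs Hg] by simp
  have qF: "q = Fq b m lO lE lU l"
  proof
    fix n
    show "q n = Fq b m lO lE lU l n"
    proof (cases "n > 2*m")
      case True then show ?thesis using Z Fq_big[OF m True] by simp
    next
      case le: False
      show ?thesis
      proof (cases "odd n")
        case True
        then obtain i where n: "n = 2*i+1" using oddE by blast
        then have "i < m" using le by simp
        then show ?thesis using oddq n by simp
      next
        case ev: False
        show ?thesis
        proof (cases "n = 0")
          case True
          have "Fq b m lO lE lU l 0 + Fq b m lO lE lU l 1 / 2 = 1 - b / (2 * real m) - (real m - 1) / v1"
            by (rule Fq_E1[OF m v1 b(1) Hs Hg])
          moreover have "Fq b m lO lE lU l 1 = q 1" using oddq m by (metis One_nat_def mult_0_right add_0 less_le_trans pos2 zero_less_Suc)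
          ultimately show ?thesis using qd True by (simp add: M_def)
        next
          case nz0: False
          define i where "i = n div 2 - 1"
          have n: "n = 2*(i+1)" using ev nz0 unfolding i_def by presburger
          show ?thesis
          proof (cases "i + 1 < m")
            case True
            have o1: "Fq b m lO lE lU l (2*i+1) = q (2*i+1)" using oddq True by simp
            have o2: "Fq b m lO lE lU l (2*(i+1)+1) = q (2*(i+1)+1)" using oddq[rule_format, OF True] .
            have "q (2*i+1) + 2 * q (2*(i+1)) + q (2*(i+1)+1) = 4 / v1" using qa True by blast
            moreover have "Fq b m lO lE lU l (2*i+1) + 2 * Fq b m lO lE lU l (2*(i+1)) + Fq b m lO lE lU l (2*(i+1)+1) = 4 / v1"
              using FR True by blast
            ultimately show ?thesis using n o1 o2 by simp
          next
            case False
            hence "n = 2*m" using n le by simp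
            moreover have "Fq b m lO lE lU l (2*m) = q (2*m)"
            proof -
              have "Fq b m lO lE lU l (2*m) = b / M * (lE / (M + 1))" using Fq_2m[OF m] by (simp add: M_def)
              also have "\<dots> = q (2*m)" unfolding lEM using nz by simp
              finally show ?thesis .
            qed
            ultimately show ?thesis by simp
          qed
        qed
      qed
    qed
  qed
  have lO0: "0 \<le> lO" using strat_nonneg[OF sq, of 1] b by (simp add: lO_def)
  have lE0: "0 \<le> lE" using strat_nonneg[OF sq, of "2*m"] b M by (simp add: lE_def)
  have l0: "\<forall>j\<in>{1..m-1}. 0 \<le> l j"
  proof
    fix j assume j: "j \<in> {1..m-1}"
    define i where "i = j - 1"
    have i: "i + 1 < m" "j = i + 1" using j m by (auto simp: i_def)
    have "q (2*i+1) + 2 * q (2*(i+1)) + q (2*(i+1)+1) = 4 / v1" using qa i by blast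
    moreover have "q (2*i+1) + q (2*i+2) \<le> 2 / v1" using qb i by simp
    moreover have "2*(i+1) = 2*i+2" by simp
    ultimately have "q (2*(i+1)+1) \<ge> q (2*i+1)" by (simp add: field_simps)
    moreover have "2*j - 1 = 2*i+1" "2*j+1 = 2*(i+1)+1" using i by simp_all
    ultimately show "0 \<le> l j" using b by (simp add: l_def)
  qed
  have lU0: "0 \<le> lU"
  proof -
    have "Fq b m lO lE lU l (2*(m-1)+1) + Fq b m lO lE lU l (2*m) = 2 / v1 - b / real m * (lU / (real m - 1))"
      by (rule Fq_top[OF m v1 b(1) Hs Hg])
    moreover have "q (2*(m-1)+1) + q (2*(m-1)+2) \<le> 2 / v1" using qb m by simp
    moreover have "2*(m-1)+2 = 2*m" using m by simp
    ultimately have X: "b / real m * (lU / (real m - 1)) \<ge> 0" using qF by simp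
    have pos: "b / real m > 0" "real m - 1 > 0" using b m by auto
    have "lU / (real m - 1) \<ge> 0"
    proof (rule ccontr)
      assume "\<not> lU / (real m - 1) \<ge> 0"
      hence "b / real m * (lU / (real m - 1)) < 0" using pos(1) mult_pos_neg by (metis not_le)
      thus False using X by simp
    qed
    thus ?thesis using pos(2) by (simp add: zero_le_divide_iff)
  qed
  have lOb: "lO \<ge> 2 * real m / (2 * b) * (2 * real m * (2 * real m + 2) / (2 * v1) + b - 2 * real m)"
  proof -
    have "(M + 1) / v1 = (M - 1) / v1 + 2 / v1" by (simp add: add_divide_distrib[symmetric])
    hence "q 1 / 2 \<ge> (M + 1) / v1 - 1 + b / (2 * M)" using qc qd by linarith
    moreover have t: "\<And>x y::real. x \<le> y / 2 \<Longrightarrow> 2 * x \<le> y" by simp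
    ultimately have "2 * ((M + 1) / v1 - 1 + b / (2 * M)) \<le> q 1" by blast
    hence "M^2 / b * (2 * ((M + 1) / v1 - 1 + b / (2 * M))) \<le> M^2 / b * q 1"
      using b by (intro mult_left_mono) auto
    hence X: "lO \<ge> M^2 / b * (2 * ((M + 1) / v1 - 1 + b / (2 * M)))"
      unfolding lO_def by simp
    have eqAB: "M^2 / b * (2 * ((M + 1) / v1 - 1 + b / (2 * M))) = 2 * M / (2 * b) * (2 * M * (2 * M + 2) / (2 * v1) + b - 2 * M)"
      using nz by (simp add: field_simps power2_eq_square)
    have "lO \<ge> 2 * M / (2 * b) * (2 * M * (2 * M + 2) / (2 * v1) + b - 2 * M)" using X unfolding eqAB .
    thus ?thesis unfolding M_def .
  qed
  have lU1: "lU \<le> 1" using Hs lO0 lE0 l0 sum_nonneg[of "{1..m-1}" l] by simp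
  have lE1: "lE \<le> 1" using Hs lO0 lU0 l0 sum_nonneg[of "{1..m-1}" l] by simp
  have g: "lU / (M - 1) - lE / (M + 1) = 2 * M^2 / (v1 * b) - 1" using Hg by (simp add: M_def power2_eq_square)
  have Mp: "M > 1" using M by simp
  have vb: "v1 * b > 0" using v1 b by simp
  have blo: "2 * M * (2 * M - 2) / (2 * v1) \<le> b"
  proof -
    have "lU / (M - 1) \<le> 1 / (M - 1)" using lU1 Mp by (simp add: divide_right_mono)
    moreover have "lE / (M + 1) \<ge> 0" using lE0 Mp by simp
    ultimately have X1: "2 * M^2 / (v1 * b) \<le> 1 + 1 / (M - 1)" using g by linarith
    have "1 + 1 / (M - 1) = M / (M - 1)" using Mp by (simp add: field_simps)
    hence X2: "2 * M^2 / (v1 * b) \<le> M / (M - 1)" using X1 by simp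
    have "2 * M^2 / (v1 * b) * ((v1 * b) * (M - 1)) \<le> M / (M - 1) * ((v1 * b) * (M - 1))"
      by (rule mult_right_mono[OF X2]) (use vb Mp in simp)
    moreover have "2 * M^2 / (v1 * b) * ((v1 * b) * (M - 1)) = M * (2 * M * (M - 1))"
      using nz by (simp add: field_simps power2_eq_square)
    moreover have "M / (M - 1) * ((v1 * b) * (M - 1)) = M * (v1 * b)"
      using Mp by (simp add: field_simps)
    ultimately have "M * (2 * M * (M - 1)) \<le> M * (v1 * b)" by simp
    hence "2 * M * (M - 1) \<le> v1 * b" using Mp by simp
    moreover have "2 * M * (2 * M - 2) / (2 * v1) = 2 * M * (M - 1) / v1" using nz by (simp add: field_simps)
    ultimately show ?thesis using v1 by (simp add: pos_divide_le_eq algebra_simps)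
  qed
  have bhi: "b \<le> 2 * M * (2 * M + 2) / (2 * v1)"
  proof -
    have "lE / (M + 1) \<le> 1 / (M + 1)" using lE1 Mp by (simp add: divide_right_mono)
    moreover have "lU / (M - 1) \<ge> 0" using lU0 Mp by simp
    ultimately have X1: "2 * M^2 / (v1 * b) \<ge> 1 - 1 / (M + 1)" using g by linarith
    have "1 - 1 / (M + 1) = M / (M + 1)" using Mp by (simp add: field_simps)
    hence X2: "M / (M + 1) \<le> 2 * M^2 / (v1 * b)" using X1 by simp
    have "M / (M + 1) * ((v1 * b) * (M + 1)) \<le> 2 * M^2 / (v1 * b) * ((v1 * b) * (M + 1))"
      by (rule mult_right_mono[OF X2]) (use vb Mp in simp)
    moreover have "2 * M^2 / (v1 * b) * ((v1 * b) * (M + 1)) = M * (2 * M * (M + 1))"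
      using nz by (simp add: field_simps power2_eq_square)
    moreover have "M / (M + 1) * ((v1 * b) * (M + 1)) = M * (v1 * b)"
      using Mp by (simp add: field_simps)
    ultimately have "M * (v1 * b) \<le> M * (2 * M * (M + 1))" by simp
    hence "v1 * b \<le> 2 * M * (M + 1)" using Mp by simp
    moreover have "2 * M * (2 * M + 2) / (2 * v1) = 2 * M * (M + 1) / v1" using nz by (simp add: field_simps)
    ultimately show ?thesis using v1 by (simp add: pos_le_divide_eq algebra_simps)
  qed
  show ?thesis using blo bhi lO0 lE0 lU0 l0 Hs Hg lOb qF unfolding M_def by blast
qed

theorem proposition5:
  fixes v1 v2 b :: real and m :: nat and p q :: "nat \<Rightarrow> real"
  assumes "v1 \<ge> v2" and "v2 > 0" and "m \<ge> 2" and "0 < b" and "b < real m"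
    and "strategy p" and "strategy q"
    and "mean p = real m" and "mean q = b"
  shows "(nash v1 v2 p q \<longleftrightarrow>
            (real m = v2 / 2 \<and>
             v2 * (v2 - 2) / (2 * v1) \<le> b \<and> b \<le> v2 * (v2 + 2) / (2 * v1) \<and>
             p = UO m \<and>
             (\<exists>lO lE lU (l :: nat \<Rightarrow> real).
                0 \<le> lO \<and> 0 \<le> lE \<and> 0 \<le> lU \<and> (\<forall>j\<in>{1..m-1}. 0 \<le> l j) \<and>
                lO + lE + lU + (\<Sum>j=1..m-1. l j) = 1 \<and>
                lU / (real m - 1) - lE / (real m + 1) = v2^2 / (2 * v1 * b) - 1 \<and>
                lO \<ge> v2 / (2 * b) * (v2 * (v2 + 2) / (2 * v1) + b - v2) \<and>
                q = (\<lambda>n. (1 - b / real m) * delta 0 n + b / real m *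
                       (lO * UO m n + lE * UE m n + lU * UOup m n
                        + (\<Sum>j=1..m-1. l j * W m j n))))))
         \<and> (nash v1 v2 p q \<longrightarrow>
              payoff v1 p q = (v1 - v2) / 2 + v1 / v2 * (v2 / 2 - b) \<and>
              payoff v2 q p = 0)"
proof -
  have m1: "m \<ge> 1" and m2: "m \<ge> 2" using assms(3) by auto
  have v1pos: "v1 > 0" using assms(1,2) by simp
  have b: "0 < b" "b < real m" using assms(4,5) by auto
  have sp: "strategy p" and sq: "strategy q" using assms(6,7) by auto
  have mp: "mean p = real m" and mq: "mean q = b" using assms(8,9) by auto
  have fwd: "nash v1 v2 p q \<Longrightarrow> v2 = 2 * real m \<and> payoff v2 q p = 0 \<and> p = UO m \<and>
         payoff v1 p q = v1 - real m - v1 * b / (2 * real m) \<and>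
         (\<forall>k. u v1 q k \<le> payoff v1 p q) \<and>
         (\<forall>i<m. u v1 q (2*i+1) = payoff v1 p q) \<and>
         (\<forall>k>2*m. q k = 0) \<and> cdf q (2*m+1) = 1"
    by (rule nash_structure[OF _ assms(1,2) m1 b sp sq mp mq])
  show ?thesis
  proof (intro conjI impI)
    assume N: "nash v1 v2 p q"
    note F = fwd[OF N]
    have v2m: "v2 = 2 * real m" using F by blast
    show "payoff v2 q p = 0" using F by blast
    have "payoff v1 p q = v1 - real m - v1 * b / (2 * real m)" using F by blast
    thus "payoff v1 p q = (v1 - v2) / 2 + v1 / v2 * (v2 / 2 - b)"
      using v2m m1 by (simp add: field_simps)
  next
    show "nash v1 v2 p q \<longleftrightarrow>
            (real m = v2 / 2 \<and>
             v2 * (v2 - 2) / (2 * v1) \<le> b \<and> b \<le> v2 * (v2 + 2) / (2 * v1) \<and>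
             p = UO m \<and>
             (\<exists>lO lE lU (l :: nat \<Rightarrow> real).
                0 \<le> lO \<and> 0 \<le> lE \<and> 0 \<le> lU \<and> (\<forall>j\<in>{1..m-1}. 0 \<le> l j) \<and>
                lO + lE + lU + (\<Sum>j=1..m-1. l j) = 1 \<and>
                lU / (real m - 1) - lE / (real m + 1) = v2^2 / (2 * v1 * b) - 1 \<and>
                lO \<ge> v2 / (2 * b) * (v2 * (v2 + 2) / (2 * v1) + b - v2) \<and>
                q = (\<lambda>n. (1 - b / real m) * delta 0 n + b / real m *
                       (lO * UO m n + lE * UE m n + lU * UOup m n
                        + (\<Sum>j=1..m-1. l j * W m j n)))))"
    proof
      assume N: "nash v1 v2 p q"
      note F = fwd[OF N]
      have v2m: "v2 = 2 * real m" using F by blast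
      have R: "2 * real m * (2 * real m - 2) / (2 * v1) \<le> b \<and> b \<le> 2 * real m * (2 * real m + 2) / (2 * v1) \<and>
        (\<exists>lO lE lU l. 0 \<le> lO \<and> 0 \<le> lE \<and> 0 \<le> lU \<and> (\<forall>j\<in>{1..m-1}. 0 \<le> l j) \<and>
           lO + lE + lU + (\<Sum>j=1..m-1. l j) = 1 \<and>
           lU / (real m - 1) - lE / (real m + 1) = (2 * real m)^2 / (2 * v1 * b) - 1 \<and>
           lO \<ge> 2 * real m / (2 * b) * (2 * real m * (2 * real m + 2) / (2 * v1) + b - 2 * real m) \<and>
           q = Fq b m lO lE lU l)"
        by (rule only_if_q[OF m2 v1pos b sq _ _ _ _ _, of "payoff v1 p q"]) (use F in auto)
      then show "real m = v2 / 2 \<and>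
             v2 * (v2 - 2) / (2 * v1) \<le> b \<and> b \<le> v2 * (v2 + 2) / (2 * v1) \<and>
             p = UO m \<and>
             (\<exists>lO lE lU (l :: nat \<Rightarrow> real).
                0 \<le> lO \<and> 0 \<le> lE \<and> 0 \<le> lU \<and> (\<forall>j\<in>{1..m-1}. 0 \<le> l j) \<and>
                lO + lE + lU + (\<Sum>j=1..m-1. l j) = 1 \<and>
                lU / (real m - 1) - lE / (real m + 1) = v2^2 / (2 * v1 * b) - 1 \<and>
                lO \<ge> v2 / (2 * b) * (v2 * (v2 + 2) / (2 * v1) + b - v2) \<and>
                q = (\<lambda>n. (1 - b / real m) * delta 0 n + b / real m *
                       (lO * UO m n + lE * UE m n + lU * UOup m n
                        + (\<Sum>j=1..m-1. l j * W m j n))))"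
        using F v2m unfolding Fq_def by simp
    next
      assume H: "real m = v2 / 2 \<and>
             v2 * (v2 - 2) / (2 * v1) \<le> b \<and> b \<le> v2 * (v2 + 2) / (2 * v1) \<and>
             p = UO m \<and>
             (\<exists>lO lE lU (l :: nat \<Rightarrow> real).
                0 \<le> lO \<and> 0 \<le> lE \<and> 0 \<le> lU \<and> (\<forall>j\<in>{1..m-1}. 0 \<le> l j) \<and>
                lO + lE + lU + (\<Sum>j=1..m-1. l j) = 1 \<and>
                lU / (real m - 1) - lE / (real m + 1) = v2^2 / (2 * v1 * b) - 1 \<and>
                lO \<ge> v2 / (2 * b) * (v2 * (v2 + 2) / (2 * v1) + b - v2) \<and>
                q = (\<lambda>n. (1 - b / real m) * delta 0 n + b / real m *
                       (lO * UO m n + lE * UE m n + lU * UOup m n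
                        + (\<Sum>j=1..m-1. l j * W m j n))))"
      have v2m: "v2 = 2 * real m" using H by simp
      have pU: "p = UO m" using H by simp
      from H obtain lO lE lU l where L:
        "0 \<le> lO" "0 \<le> lE" "0 \<le> lU" "\<forall>j\<in>{1..m-1}. 0 \<le> l j"
        "lO + lE + lU + (\<Sum>j=1..m-1. l j) = 1"
        "lU / (real m - 1) - lE / (real m + 1) = v2^2 / (2 * v1 * b) - 1"
        "lO \<ge> v2 / (2 * b) * (v2 * (v2 + 2) / (2 * v1) + b - v2)"
        "q = (\<lambda>n. (1 - b / real m) * delta 0 n + b / real m *
                       (lO * UO m n + lE * UE m n + lU * UOup m n
                        + (\<Sum>j=1..m-1. l j * W m j n)))" by blast
      have "nash v1 v2 p q \<and> payoff v2 q p = 0"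
        by (rule if_direction[OF m2 v1pos v2m b sp sq pU L(1-5)]) (use L(6-8) v2m in \<open>simp_all add: Fq_def\<close>)
      thus "nash v1 v2 p q" by simp
    qed
  qed
qed

end
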